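(* Let $m\ge 2$, $n=n_1+\cdots+n_r$, and let $\mathcal{A},\mathcal{B}$ be real $m$-th order $n$-dimensional tensors such that $\mathcal{A}x^m\neq 0$ for every $x\in\mathcal{K}\setminus\{0\}$. Define $\lambda(x)=\mathcal{B}x^m/\mathcal{A}x^m$ and $F(x)=\lambda(x)\mathcal{A}x^{m-1}-\mathcal{B}x^{m-1}$ for $x\in\mathcal{K}\setminus\{0\}$. If $\bar x\in\mathcal{K}_0$ satisfies $$F(\bar x)^\top(z-\bar x)\ge 0\quad\text{for all } z\in\mathcal{K}_0,$$ then $(\bar x,\lambda(\bar x))$ is a solution of the second-order cone tensor eigenvalue complementarity problem, i.e. $\bar x\neq 0$, $\bar x\in\mathcal{K}$, $\bar w:=(\lambda(\bar x)\mathcal{A}-\mathcal{B})\bar x^{m-1}\in\mathcal{K}$ and $\langle \bar x,\bar w\rangle=0$.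
   Context: A real $m$-th order $n$-dimensional tensor is an array $\mathcal{A}=(a_{i_1\ldots i_m})$, $a_{i_1\ldots i_m}\in\mathbb{R}$, $1\le i_1,\ldots,i_m\le n$. For $x\in\mathbb{R}^n$, $\mathcal{A}x^{m-1}\in\mathbb{R}^n$ has $i$-th component $\sum_{i_2,\ldots,i_m=1}^n a_{ii_2\ldots i_m}x_{i_2}\cdots x_{i_m}$, and $\mathcal{A}x^m=\sum_{i_1,\ldots,i_m=1}^n a_{i_1\ldots i_m}x_{i_1}\cdots x_{i_m}$. Vectors $x\in\mathbb{R}^n$ are written $x=(x^1,\ldots,x^r)\in\mathbb{R}^{n_1}\times\cdots\times\mathbb{R}^{n_r}$ with $x^i=(x^i_\circ,x^i_\bullet)\in\mathbb{R}\times\mathbb{R}^{n_i-1}$. The second-order cone is $\mathcal{K}=\mathcal{K}^{n_1}\times\cdots\times\mathcal{K}^{n_r}$ with $\mathcal{K}^{n_i}=\{x^i\in\mathbb{R}^{n_i}: x^i_\circ\ge\|x^i_\bullet\|\}$ (Euclidean norm); $\mathcal{K}$ is self-dual. Let $e=(e^1,\ldots,e^r)$ with $e^i=(1,0,\ldots,0)^\top\in\mathbb{R}^{n_i}$ and $\mathcal{K}_0=\{x\in\mathcal{K}: e^\top x=1\}$. *)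

theory Defs
  imports Complex_Main
begin

text \<open>Vectors of R^n (n = n_1 + ... + n_r) are functions nat => real vanishing at
indices >= n. The block structure is given by the list ns = [n_1,...,n_r].
Block i (0-based) occupies indices blk_start ns i, ..., blk_start ns i + ns!i - 1,
its first index being the component x^i_o.\<close>

definition blk_start :: "nat list \<Rightarrow> nat \<Rightarrow> nat" where
  "blk_start ns i = sum_list (take i ns)"

definition soc :: "nat list \<Rightarrow> (nat \<Rightarrow> real) set" where
  "soc ns = {x. (\<forall>j\<ge>sum_list ns. x j = 0) \<and>
     (\<forall>i<length ns. sqrt (\<Sum>j\<in>{blk_start ns i + 1..<blk_start ns i + ns ! i}. (x j)^2)
                       \<le> x (blk_start ns i))}"

definition soc0 :: "nat list \<Rightarrow> (nat \<Rightarrow> real) set" where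
  "soc0 ns = {x \<in> soc ns. (\<Sum>i<length ns. x (blk_start ns i)) = 1}"

definition idx :: "nat \<Rightarrow> nat \<Rightarrow> nat list set" where
  "idx k n = {is. length is = k \<and> set is \<subseteq> {..<n}}"

text \<open>A tensor of order m and dimension n is a function on index lists of length m.
A x^m :\<close>
definition tpow :: "nat \<Rightarrow> nat \<Rightarrow> (nat list \<Rightarrow> real) \<Rightarrow> (nat \<Rightarrow> real) \<Rightarrow> real" where
  "tpow n m A x = (\<Sum>is\<in>idx m n. A is * prod_list (map x is))"

definition tvec :: "nat \<Rightarrow> nat \<Rightarrow> (nat list \<Rightarrow> real) \<Rightarrow> (nat \<Rightarrow> real) \<Rightarrow> (nat \<Rightarrow> real)" where
  "tvec n m A x = (\<lambda>i. if i < n then (\<Sum>is\<in>idx (m - 1) n. A (i # is) * prod_list (map x is)) else 0)"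

definition vinner :: "nat \<Rightarrow> (nat \<Rightarrow> real) \<Rightarrow> (nat \<Rightarrow> real) \<Rightarrow> real" where
  "vinner n x y = (\<Sum>j<n. x j * y j)"

definition lam :: "nat \<Rightarrow> nat \<Rightarrow> (nat list \<Rightarrow> real) \<Rightarrow> (nat list \<Rightarrow> real) \<Rightarrow> (nat \<Rightarrow> real) \<Rightarrow> real" where
  "lam n m A B x = tpow n m B x / tpow n m A x"

definition Fmap :: "nat \<Rightarrow> nat \<Rightarrow> (nat list \<Rightarrow> real) \<Rightarrow> (nat list \<Rightarrow> real) \<Rightarrow> (nat \<Rightarrow> real) \<Rightarrow> (nat \<Rightarrow> real)" where
  "Fmap n m A B x = (\<lambda>i. lam n m A B x * tvec n m A x i - tvec n m B x i)"

end

theory Submission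
  imports Defs
begin

lemma blk_mono:
  assumes "i \<le> i'" shows "blk_start ns i \<le> blk_start ns i'"
proof -
  have "take i' ns = take i (take i' ns) @ drop i (take i' ns)" by (metis append_take_drop_id)
  also have "take i (take i' ns) = take i ns" using assms by (simp add: min_def)
  finally have "sum_list (take i' ns) = sum_list (take i ns) + sum_list (drop i (take i' ns))"
    by (metis sum_list_append)
  thus ?thesis unfolding blk_start_def by simp
qed

lemma blk_suc:
  assumes "i < length ns" shows "blk_start ns (Suc i) = blk_start ns i + ns ! i"
  using assms unfolding blk_start_def by (simp add: take_Suc_conv_app_nth)

lemma blk_lt:
  assumes "i < i'" "i < length ns" shows "blk_start ns i + ns ! i \<le> blk_start ns i'"
  using blk_mono[of "Suc i" i' ns] blk_suc[OF assms(2)] assms by simp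

lemma blk_end:
  assumes "i < length ns" shows "blk_start ns i + ns ! i \<le> sum_list ns"
proof -
  have "blk_start ns (Suc i) \<le> blk_start ns (length ns)" using assms blk_mono by simp
  moreover have "blk_start ns (length ns) = sum_list ns" unfolding blk_start_def by simp
  ultimately show ?thesis using blk_suc[OF assms] by simp
qed

lemma idx_Suc: "idx (Suc k) n = (\<lambda>(j, is). j # is) ` ({..<n} \<times> idx k n)"
proof (rule set_eqI)
  fix xs
  show "xs \<in> idx (Suc k) n \<longleftrightarrow> xs \<in> (\<lambda>(j, is). j # is) ` ({..<n} \<times> idx k n)"
  proof
    assume "xs \<in> idx (Suc k) n"
    then obtain j ys where "xs = j # ys" "length ys = k" "j < n" "set ys \<subseteq> {..<n}"
      unfolding idx_def by (cases xs) auto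
    thus "xs \<in> (\<lambda>(j, is). j # is) ` ({..<n} \<times> idx k n)"
      unfolding idx_def by (auto intro!: image_eqI[where x="(j,ys)"])
  qed (auto simp: idx_def)
qed

lemma euler:
  assumes "m \<ge> 1"
  shows "vinner n x (tvec n m A x) = tpow n m A x"
proof -
  obtain k where mk: "m = Suc k" using assms by (cases m) auto
  have inj: "inj_on (\<lambda>(j, is). j # is) ({..<n} \<times> idx k n)" by (auto simp: inj_on_def)
  have "tpow n m A x = (\<Sum>p\<in>{..<n} \<times> idx k n. A (fst p # snd p) * prod_list (map x (fst p # snd p)))"
    unfolding tpow_def mk idx_Suc by (subst sum.reindex[OF inj]) (simp add: case_prod_beta)
  also have "\<dots> = (\<Sum>j<n. \<Sum>is\<in>idx k n. A (j # is) * (x j * prod_list (map x is)))"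
    unfolding sum.cartesian_product by (simp add: case_prod_beta algebra_simps)
  also have "\<dots> = vinner n x (tvec n m A x)"
    unfolding vinner_def tvec_def mk
    by (auto simp: sum_distrib_left algebra_simps intro!: sum.cong)
  finally show ?thesis by simp
qed

lemma vinner_comm: "vinner n x y = vinner n y x"
  unfolding vinner_def by (simp add: mult.commute)

theorem theorem1:
  fixes ns :: "nat list" and m :: nat and A B :: "nat list \<Rightarrow> real" and xb :: "nat \<Rightarrow> real"
  defines "n \<equiv> sum_list ns"
  assumes m2: "m \<ge> 2"
    and blocks: "\<forall>k\<in>set ns. k \<ge> 1"
    and Anz: "\<forall>x\<in>soc ns - {\<lambda>_. 0}. tpow n m A x \<noteq> 0"
    and xb0: "xb \<in> soc0 ns"
    and VI: "\<forall>z\<in>soc0 ns. vinner n (Fmap n m A B xb) (\<lambda>j. z j - xb j) \<ge> 0"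
  shows "xb \<noteq> (\<lambda>_. 0) \<and> xb \<in> soc ns \<and>
         (\<lambda>i. lam n m A B xb * tvec n m A xb i - tvec n m B xb i) \<in> soc ns \<and>
         vinner n xb (\<lambda>i. lam n m A B xb * tvec n m A xb i - tvec n m B xb i) = 0"
proof -
  define F where "F = Fmap n m A B xb"
  have Fe: "(\<lambda>i. lam n m A B xb * tvec n m A xb i - tvec n m B xb i) = F"
    unfolding F_def Fmap_def by simp
  have xsoc: "xb \<in> soc ns" using xb0 unfolding soc0_def by simp
  have nz: "xb \<noteq> (\<lambda>_. 0)" using xb0 unfolding soc0_def by auto
  have tA: "tpow n m A xb \<noteq> 0" using Anz xsoc nz by auto
  have lin: "vinner n xb F = lam n m A B xb * vinner n xb (tvec n m A xb) - vinner n xb (tvec n m B xb)"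
    unfolding F_def Fmap_def vinner_def
    by (simp add: sum_subtractf sum_distrib_left algebra_simps)
  have comp: "vinner n xb F = 0"
    unfolding lin using m2 tA by (simp add: euler lam_def)
  have dual: "vinner n F z \<ge> 0" if "z \<in> soc0 ns" for z
  proof -
    have "vinner n F (\<lambda>j. z j - xb j) = vinner n F z - vinner n F xb"
      unfolding vinner_def by (simp add: sum_subtractf algebra_simps)
    thus ?thesis using VI that comp vinner_comm[of n F xb] F_def by auto
  qed
  have Fsoc: "F \<in> soc ns"
    unfolding soc_def
  proof (intro CollectI conjI allI impI)
    fix j assume "sum_list ns \<le> j" thus "F j = 0"
      unfolding F_def Fmap_def tvec_def n_def by simp
  next
    fix i assume il: "i < length ns"
    define s where "s = blk_start ns i"
    define k where "k = ns ! i"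
    define S where "S = {s + 1..<s + k}"
    define N where "N = sqrt (\<Sum>j\<in>S. (F j)^2)"
    have k1: "k \<ge> 1" using blocks il k_def by auto
    have skn: "s + k \<le> n" using blk_end[OF il] s_def k_def n_def by simp
    define z where "z = (\<lambda>j. if j = s then 1 else if s < j \<and> j < s + k then
                             (if N = 0 then 0 else - F j / N) else (0::real))"
    have zout: "z j = 0" if "j < s \<or> s + k \<le> j" for j
      using that k1 unfolding z_def by auto
    have zsoc0: "z \<in> soc0 ns"
      unfolding soc0_def soc_def
    proof (intro CollectI conjI allI impI)
      fix j assume "sum_list ns \<le> j" thus "z j = 0" using zout skn n_def by simp
    next
      fix i' assume il': "i' < length ns"
      show "sqrt (\<Sum>j\<in>{blk_start ns i' + 1..<blk_start ns i' + ns ! i'}. (z j)^2) \<le> z (blk_start ns i')"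
      proof (cases "i' = i")
        case True
        have "(\<Sum>j\<in>S. (z j)^2) = (\<Sum>j\<in>S. (if N = 0 then 0 else (F j)^2 / N^2))"
          by (rule sum.cong) (auto simp: z_def S_def power_divide)
        also have "\<dots> \<le> 1"
        proof (cases "N = 0")
          case False
          have "(\<Sum>j\<in>S. (F j)^2 / N^2) = (\<Sum>j\<in>S. (F j)^2) / N^2" by (simp add: sum_divide_distrib)
          also have "(\<Sum>j\<in>S. (F j)^2) = N^2" unfolding N_def by (simp add: sum_nonneg)
          finally show ?thesis using False by simp
        qed simp
        finally have "sqrt (\<Sum>j\<in>S. (z j)^2) \<le> z s" by (simp add: z_def)
        thus ?thesis using True by (simp add: S_def s_def k_def)
      next
        case False
        have dis: "blk_start ns i' + ns ! i' \<le> s \<or> s + k \<le> blk_start ns i'"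
          using False blk_lt[OF _ il] blk_lt[OF _ il'] s_def k_def by (cases "i' < i") auto
        have "(\<Sum>j\<in>{blk_start ns i' + 1..<blk_start ns i' + ns ! i'}. (z j)^2) = 0"
          using dis by (intro sum.neutral) (auto intro!: zout)
        moreover have "z (blk_start ns i') = 0"
          proof (rule zout)
            have "ns ! i' \<ge> 1" using blocks il' nth_mem by auto
            thus "blk_start ns i' < s \<or> s + k \<le> blk_start ns i'" using dis by auto
          qed
        ultimately show ?thesis by simp
      qed
    next
      have "(\<Sum>i'<length ns. z (blk_start ns i')) = (\<Sum>i'<length ns. if i' = i then 1 else 0)"
      proof (rule sum.cong)
        fix i' assume il': "i' \<in> {..<length ns}"
        show "z (blk_start ns i') = (if i' = i then 1 else 0)"
        proof (cases "i' = i")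
          case False
          have dis: "blk_start ns i' + ns ! i' \<le> s \<or> s + k \<le> blk_start ns i'"
            using False blk_lt[OF _ il] blk_lt[of i' i ns] il' s_def k_def by (cases "i' < i") auto
          have "z (blk_start ns i') = 0"
            proof (rule zout)
            have "ns ! i' \<ge> 1" using blocks il' nth_mem by auto
            thus "blk_start ns i' < s \<or> s + k \<le> blk_start ns i'" using dis by auto
          qed
          thus ?thesis using False by simp
        qed (simp add: z_def s_def)
      qed simp
      also have "\<dots> = 1" using il by simp
      finally show "(\<Sum>i'<length ns. z (blk_start ns i')) = 1" .
    qed
    have "vinner n F z = (\<Sum>j\<in>{s..<s+k}. F j * z j)"
      unfolding vinner_def
      by (rule sum.mono_neutral_right) (use skn zout in auto)
    also have "{s..<s+k} = insert s S" using k1 S_def by auto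
    also have "(\<Sum>j\<in>insert s S. F j * z j) = F s + (\<Sum>j\<in>S. F j * z j)"
      by (simp add: S_def z_def)
    also have "(\<Sum>j\<in>S. F j * z j) = - N"
    proof (cases "N = 0")
      case True thus ?thesis by (simp add: z_def S_def)
    next
      case False
      have "(\<Sum>j\<in>S. F j * z j) = (\<Sum>j\<in>S. - ((F j)^2) / N)"
        by (rule sum.cong) (auto simp: z_def S_def power2_eq_square)
      also have "\<dots> = - (\<Sum>j\<in>S. (F j)^2) / N"
        by (simp add: sum_divide_distrib sum_negf)
      also have "(\<Sum>j\<in>S. (F j)^2) = N^2" unfolding N_def by (simp add: sum_nonneg)
      finally show ?thesis using False by (simp add: power2_eq_square)
    qed
    finally have "vinner n F z = F s - N" by simp
    with dual[OF zsoc0] show "sqrt (\<Sum>j\<in>{blk_start ns i + 1..<blk_start ns i + ns ! i}. (F j)^2) \<le> F (blk_start ns i)"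
      by (simp add: N_def S_def s_def k_def)
  qed
  show ?thesis using nz xsoc Fsoc comp unfolding Fe by simp
qed

end
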